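(* Let $I$ be a conserved interval of $\mathcal{P}$ with maximal frontier set $F_I=\{f_1<f_2<\cdots<f_k\}$, and let $(a..c)\subseteq I$ be a conserved interval. Then exactly one of the following holds: (1) some $f_l$ lies in $(a..c)$, and then there exist $i\leq j$ such that $(a..c)=(f_i..f_j)$; (2) $(a..c)$ contains no element of $F_I$, and then there exists $i$ such that $f_i<a\leq c<f_{i+1}$.
   Context: Let $n\geq 2$ and let $\mathcal{P}=\{P_1,\ldots,P_K\}$ be signed permutations of $\{1,\ldots,n\}$: each $P_k$ is an ordering of $1,\ldots,n$ in which each element carries a sign $+$ or $-$. Assume $P_1=(+1,+2,\ldots,+n)$ and that every $P_k$ has first element $+1$ and last element $+n$. For integers $i\leq j$ write $(i..j)=\{i,\ldots,j\}$. A conserved interval of $\mathcal{P}$ is either a singleton, or a set $(a..c)$ with $a<c$ which (ignoring signs) occupies consecutive positions in every $P_k$ and which, in every $P_k$, has either $+a$ at its left end and $+c$ at its right end, or $-c$ at its left end and $-a$ at its right end. For a conserved interval $I=(a..c)$, a set $\{f_1,\ldots,f_k\}$ with $a=f_1<\cdots<f_k=c$ is a set of frontiers of $I$ if $(f_i..f_j)$ is conserved for all $1\leq i<j\leq k$; $F_I$ denotes the unique inclusion-maximal set of frontiers of $I$ (the union of all sets of frontiers of $I$). *)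

theory Defs
  imports Main
begin

definition signed_perm :: "nat \<Rightarrow> int list \<Rightarrow> bool" where
  "signed_perm n P \<longleftrightarrow> length P = n \<and> distinct (map abs P) \<and> set (map abs P) = {1..int n}"

definition conserved_in :: "int list \<Rightarrow> int \<Rightarrow> int \<Rightarrow> bool" where
  "conserved_in P a c \<longleftrightarrow>
     (\<exists>p. p + nat (c - a) < length P
        \<and> abs ` set (take (nat (c - a) + 1) (drop p P)) = {a..c}
        \<and> ((P ! p = a \<and> P ! (p + nat (c - a)) = c)
           \<or> (P ! p = - c \<and> P ! (p + nat (c - a)) = - a)))"

definition conserved :: "int list list \<Rightarrow> nat \<Rightarrow> int \<Rightarrow> int \<Rightarrow> bool" where
  "conserved Ps n a c \<longleftrightarrow>
     (a = c \<and> 1 \<le> a \<and> a \<le> int n) \<or> (a < c \<and> (\<forall>P\<in>set Ps. conserved_in P a c))"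

definition frontier_set :: "int list list \<Rightarrow> nat \<Rightarrow> int \<Rightarrow> int \<Rightarrow> int set \<Rightarrow> bool" where
  "frontier_set Ps n a c F \<longleftrightarrow> finite F \<and> F \<subseteq> {a..c} \<and> a \<in> F \<and> c \<in> F
     \<and> (\<forall>f\<in>F. \<forall>g\<in>F. f < g \<longrightarrow> conserved Ps n f g)"

definition max_frontiers :: "int list list \<Rightarrow> nat \<Rightarrow> int \<Rightarrow> int \<Rightarrow> int set" where
  "max_frontiers Ps n a c = \<Union> {F. frontier_set Ps n a c F}"

end

theory Submission
  imports Defs
begin


definition qq :: "int list \<Rightarrow> nat \<Rightarrow> int" where "qq P i = abs (P ! i)"

definition blk :: "int list \<Rightarrow> nat \<Rightarrow> nat \<Rightarrow> int \<Rightarrow> int \<Rightarrow> bool" where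
  "blk P p e a c \<longleftrightarrow> a \<le> c \<and> p \<le> e \<and> e < length P
     \<and> (\<forall>i<length P. (p \<le> i \<and> i \<le> e) \<longleftrightarrow> (a \<le> qq P i \<and> qq P i \<le> c))
     \<and> (\<forall>v. a \<le> v \<and> v \<le> c \<longrightarrow> (\<exists>i<length P. qq P i = v))"

definition CI :: "int list \<Rightarrow> int \<Rightarrow> int \<Rightarrow> bool" where
  "CI P a c \<longleftrightarrow> (\<exists>p e. blk P p e a c \<and>
      ((P ! p = a \<and> P ! e = c) \<or> (P ! p = - c \<and> P ! e = - a)))"

lemma qq_inj: "distinct (map abs P) \<Longrightarrow> i < length P \<Longrightarrow> j < length P \<Longrightarrow> qq P i = qq P j \<Longrightarrow> i = j"
  unfolding qq_def by (simp add: distinct_conv_nth) blast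

lemma set_take_drop_nth: "p + m \<le> length P \<Longrightarrow> set (take m (drop p P)) = (\<lambda>i. P ! i) ` {p..<p+m}"
proof -
  assume h: "p + m \<le> length P"
  have "set (take m (drop p P)) = {take m (drop p P) ! k | k. k < length (take m (drop p P))}"
    by (simp add: set_conv_nth)
  also have "\<dots> = {P ! (p + k) | k. k < m}" using h by (force simp: min_def)
  also have "\<dots> = (\<lambda>i. P ! i) ` {p..<p+m}"
    by (auto simp: image_iff) (metis le_add_diff_inverse less_diff_conv2 add.commute)
  finally show ?thesis .
qed

lemma blk_nonneg: "blk P p e a c \<Longrightarrow> 0 \<le> a"
  unfolding blk_def qq_def by (metis abs_ge_zero order_refl)

lemma conserved_in_CI:
  assumes d: "distinct (map abs P)" and ac: "a < c"
  shows "conserved_in P a c \<longleftrightarrow> CI P a c"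
proof
  assume "conserved_in P a c"
  then obtain p where p1: "p + nat (c - a) < length P"
    and p2: "abs ` set (take (nat (c - a) + 1) (drop p P)) = {a..c}"
    and p3: "(P ! p = a \<and> P ! (p + nat (c - a)) = c) \<or> (P ! p = - c \<and> P ! (p + nat (c - a)) = - a)"
    unfolding conserved_in_def by blast
  define e where "e = p + nat (c - a)"
  have img: "qq P ` {p..e} = {a..c}"
  proof -
    have "set (take (nat (c - a) + 1) (drop p P)) = (\<lambda>i. P ! i) ` {p..<p + (nat (c - a) + 1)}"
      using p1 by (intro set_take_drop_nth) simp
    also have "{p..<p + (nat (c - a) + 1)} = {p..e}" unfolding e_def by auto
    finally show ?thesis using p2 unfolding qq_def by (simp add: image_image)
  qed
  have "blk P p e a c"
    unfolding blk_def
  proof (intro conjI allI impI)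
    show "a \<le> c" "p \<le> e" using ac p1 unfolding e_def by auto
    show el: "e < length P" using p1 unfolding e_def by auto
    fix v assume "a \<le> v \<and> v \<le> c"
    then have "v \<in> qq P ` {p..e}" using img by auto
    then obtain i where "i \<in> {p..e}" "qq P i = v" by blast
    then show "\<exists>i<length P. qq P i = v" using \<open>e < length P\<close> by (intro exI[of _ i]) auto
  next
    fix i assume i: "i < length P"
    show "(p \<le> i \<and> i \<le> e) = (a \<le> qq P i \<and> qq P i \<le> c)"
    proof
      assume "p \<le> i \<and> i \<le> e" then show "a \<le> qq P i \<and> qq P i \<le> c" using img by auto
    next
      assume "a \<le> qq P i \<and> qq P i \<le> c"
      then have "qq P i \<in> qq P ` {p..e}" using img by auto
      then obtain j where j: "j \<in> {p..e}" "qq P j = qq P i" by auto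
      then have "j = i" using qq_inj[OF d, of j i] i p1 unfolding e_def by auto
      then show "p \<le> i \<and> i \<le> e" using j by auto
    qed
  qed
  then show "CI P a c" unfolding CI_def using p3 e_def by blast
next
  assume "CI P a c"
  then obtain p e where b: "blk P p e a c" and o: "(P ! p = a \<and> P ! e = c) \<or> (P ! p = - c \<and> P ! e = - a)"
    unfolding CI_def by blast
  have img: "qq P ` {p..e} = {a..c}"
  proof
    show "qq P ` {p..e} \<subseteq> {a..c}" using b unfolding blk_def by (auto, meson le_less_trans)+
    show "{a..c} \<subseteq> qq P ` {p..e}"
    proof
      fix v assume "v \<in> {a..c}"
      then obtain i where "i < length P" "qq P i = v" using b unfolding blk_def by auto
      then show "v \<in> qq P ` {p..e}" using b \<open>v \<in> {a..c}\<close> unfolding blk_def by force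
    qed
  qed
  have "inj_on (qq P) {p..e}" using b qq_inj[OF d] unfolding blk_def inj_on_def by auto
  then have "card {p..e} = card {a..c}" using img card_image by metis
  then have len: "e = p + nat (c - a)" using b unfolding blk_def by auto
  have "set (take (nat (c - a) + 1) (drop p P)) = (\<lambda>i. P ! i) ` {p..<p + (nat (c - a) + 1)}"
    using b len unfolding blk_def by (intro set_take_drop_nth) simp
  also have "{p..<p + (nat (c - a) + 1)} = {p..e}" using len by auto
  finally have "abs ` set (take (nat (c - a) + 1) (drop p P)) = {a..c}"
    using img unfolding qq_def by (simp add: image_image)
  then show "conserved_in P a c" unfolding conserved_in_def using b o len unfolding blk_def by blast
qed


lemma qq_pos: "P ! i = v \<Longrightarrow> 0 \<le> v \<Longrightarrow> qq P i = v" by (simp add: qq_def)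
lemma qq_neg: "P ! i = - v \<Longrightarrow> 0 \<le> v \<Longrightarrow> qq P i = v" by (simp add: qq_def)

lemma arC1: "\<lbrakk>(p1 \<le> (i::nat) \<and> i \<le> e1) = (x \<le> (v::int) \<and> v \<le> y); (p2 \<le> i \<and> i \<le> e2) = (y \<le> v \<and> v \<le> z);
  e1 = p2; x < y; y < z; p1 \<le> e1; p2 \<le> e2; i = e1 \<longrightarrow> v = y\<rbrakk> \<Longrightarrow> (p1 \<le> i \<and> i \<le> e2) = (x \<le> v \<and> v \<le> z)"
  by (cases "i = e1"; cases "i < e1") auto
lemma arC4: "\<lbrakk>(p1 \<le> (i::nat) \<and> i \<le> e1) = (x \<le> (v::int) \<and> v \<le> y); (p2 \<le> i \<and> i \<le> e2) = (y \<le> v \<and> v \<le> z);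
  e2 = p1; x < y; y < z; p1 \<le> e1; p2 \<le> e2; i = e2 \<longrightarrow> v = y\<rbrakk> \<Longrightarrow> (p2 \<le> i \<and> i \<le> e1) = (x \<le> v \<and> v \<le> z)"
  by (cases "i = e2"; cases "i < e2") auto

lemma chain_CI:
  assumes d: "distinct (map abs P)" and xy: "x < y" and yz: "y < z"
    and c1: "CI P x y" and c2: "CI P y z"
  shows "CI P x z"
proof -
  obtain p1 e1 where b1: "blk P p1 e1 x y" and o1: "(P ! p1 = x \<and> P ! e1 = y) \<or> (P ! p1 = - y \<and> P ! e1 = - x)"
    using c1 unfolding CI_def by blast
  obtain p2 e2 where b2: "blk P p2 e2 y z" and o2: "(P ! p2 = y \<and> P ! e2 = z) \<or> (P ! p2 = - z \<and> P ! e2 = - y)"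
    using c2 unfolding CI_def by blast
  have x0: "0 \<le> x" using blk_nonneg[OF b1] .
  note B1 = b1[unfolded blk_def] and B2 = b2[unfolded blk_def]
  have l1: "e1 < length P" "p1 \<le> e1" and l2: "e2 < length P" "p2 \<le> e2" using B1 B2 by auto
  have i1: "\<And>i. i < length P \<Longrightarrow> (p1 \<le> i \<and> i \<le> e1) = (x \<le> qq P i \<and> qq P i \<le> y)" using B1 by auto
  have i2: "\<And>i. i < length P \<Longrightarrow> (p2 \<le> i \<and> i \<le> e2) = (y \<le> qq P i \<and> qq P i \<le> z)" using B2 by auto
  have pres: "\<forall>v. x \<le> v \<and> v \<le> z \<longrightarrow> (\<exists>i<length P. qq P i = v)"
    using B1 B2 by (meson linear)
  have inj: "\<And>i j. i < length P \<Longrightarrow> j < length P \<Longrightarrow> qq P i = qq P j \<Longrightarrow> i = j" using qq_inj[OF d] by blast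
  consider "P ! p1 = x" "P ! e1 = y" "P ! p2 = y" "P ! e2 = z"
    | "P ! p1 = x" "P ! e1 = y" "P ! p2 = - z" "P ! e2 = - y"
    | "P ! p1 = - y" "P ! e1 = - x" "P ! p2 = y" "P ! e2 = z"
    | "P ! p1 = - y" "P ! e1 = - x" "P ! p2 = - z" "P ! e2 = - y" using o1 o2 by blast
  then show ?thesis
  proof cases
    case 1
    have q: "qq P e1 = y" "qq P p2 = y" using 1 x0 xy by (auto intro: qq_pos)
    then have "e1 = p2" using inj l1 l2 by auto
    have "blk P p1 e2 x z" unfolding blk_def
    proof (intro conjI allI impI)
      show "x \<le> z" "p1 \<le> e2" "e2 < length P" using xy yz l1 l2 \<open>e1 = p2\<close> by auto
      fix i assume i: "i < length P"
      show "(p1 \<le> i \<and> i \<le> e2) = (x \<le> qq P i \<and> qq P i \<le> z)"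
        by (rule arC1[OF i1[OF i] i2[OF i]]) (use \<open>e1 = p2\<close> xy yz l1 l2 q in auto)
    qed (use pres in auto)
    then show ?thesis unfolding CI_def using 1 by blast
  next
    case 2
    have "qq P e1 = y" "qq P e2 = y" using 2 x0 xy by (auto intro: qq_pos qq_neg)
    then have "e1 = e2" using inj l1 l2 by auto
    then show ?thesis using 2 x0 xy by auto
  next
    case 3
    have "qq P p1 = y" "qq P p2 = y" using 3 x0 xy by (auto intro: qq_pos qq_neg)
    then have "p1 = p2" using inj l1 l2 by auto
    then show ?thesis using 3 x0 xy by auto
  next
    case 4
    have q: "qq P p1 = y" "qq P e2 = y" using 4 x0 xy by (auto intro: qq_pos qq_neg)
    then have "e2 = p1" using inj l1 l2 by auto
    have "blk P p2 e1 x z" unfolding blk_def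
    proof (intro conjI allI impI)
      show "x \<le> z" "p2 \<le> e1" "e1 < length P" using xy yz l1 l2 \<open>e2 = p1\<close> by auto
      fix i assume i: "i < length P"
      show "(p2 \<le> i \<and> i \<le> e1) = (x \<le> qq P i \<and> qq P i \<le> z)"
        by (rule arC4[OF i1[OF i] i2[OF i]]) (use \<open>e2 = p1\<close> xy yz l1 l2 q in auto)
    qed (use pres in auto)
    then show ?thesis unfolding CI_def using 4 by blast
  qed
qed


lemma arR1: "\<lbrakk>(p1 \<le> (i::nat) \<and> i \<le> e1) = (x \<le> (v::int) \<and> v \<le> z); (p2 \<le> i \<and> i \<le> e2) = (y \<le> v \<and> v \<le> z);
  e1 = e2; x < y; y < z; p1 \<le> p2; p2 \<le> e1; (v = y) = (i = p2)\<rbrakk> \<Longrightarrow> (p1 \<le> i \<and> i \<le> p2) = (x \<le> v \<and> v \<le> y)"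
  by (cases "i = p2"; cases "i < p2") auto
lemma arR4: "\<lbrakk>(p1 \<le> (i::nat) \<and> i \<le> e1) = (x \<le> (v::int) \<and> v \<le> z); (p2 \<le> i \<and> i \<le> e2) = (y \<le> v \<and> v \<le> z);
  p1 = p2; x < y; y < z; e2 \<le> e1; p2 \<le> e2; (v = y) = (i = e2)\<rbrakk> \<Longrightarrow> (e2 \<le> i \<and> i \<le> e1) = (x \<le> v \<and> v \<le> y)"
  by (cases "i = e2"; cases "i < e2") auto
lemma arL1: "\<lbrakk>(p1 \<le> (i::nat) \<and> i \<le> e1) = (x \<le> (v::int) \<and> v \<le> z); (p2 \<le> i \<and> i \<le> e2) = (x \<le> v \<and> v \<le> y);
  p1 = p2; x < y; y < z; e2 \<le> e1; p2 \<le> e2; (v = y) = (i = e2)\<rbrakk> \<Longrightarrow> (e2 \<le> i \<and> i \<le> e1) = (y \<le> v \<and> v \<le> z)"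
  by (cases "i = e2"; cases "i < e2") auto
lemma arL4: "\<lbrakk>(p1 \<le> (i::nat) \<and> i \<le> e1) = (x \<le> (v::int) \<and> v \<le> z); (p2 \<le> i \<and> i \<le> e2) = (x \<le> v \<and> v \<le> y);
  e1 = e2; x < y; y < z; p1 \<le> p2; p2 \<le> e2; (v = y) = (i = p2)\<rbrakk> \<Longrightarrow> (p1 \<le> i \<and> i \<le> p2) = (y \<le> v \<and> v \<le> z)"
  by (cases "i = p2"; cases "i < p2") auto
lemma arO1: "\<lbrakk>(p1 \<le> (i::nat) \<and> i \<le> e1) = (x \<le> (v::int) \<and> v \<le> z); (p2 \<le> i \<and> i \<le> e2) = (y \<le> v \<and> v \<le> w);
  x < y; y < z; z < w; p1 \<le> p2; p2 \<le> e1; e1 \<le> e2\<rbrakk> \<Longrightarrow> (p1 \<le> i \<and> i \<le> e2) = (x \<le> v \<and> v \<le> w)"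
  by (cases "i \<le> e1"; cases "i < p2") auto
lemma arO4: "\<lbrakk>(p1 \<le> (i::nat) \<and> i \<le> e1) = (x \<le> (v::int) \<and> v \<le> z); (p2 \<le> i \<and> i \<le> e2) = (y \<le> v \<and> v \<le> w);
  x < y; y < z; z < w; p2 \<le> p1; p1 \<le> e2; e2 \<le> e1\<rbrakk> \<Longrightarrow> (p2 \<le> i \<and> i \<le> e1) = (x \<le> v \<and> v \<le> w)"
  by (cases "i \<le> e2"; cases "i < p1") auto

lemma nestR_CI:
  assumes d: "distinct (map abs P)" and xy: "x < y" and yz: "y < z"
    and c1: "CI P x z" and c2: "CI P y z"
  shows "CI P x y"
proof -
  obtain p1 e1 where b1: "blk P p1 e1 x z" and o1: "(P ! p1 = x \<and> P ! e1 = z) \<or> (P ! p1 = - z \<and> P ! e1 = - x)"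
    using c1 unfolding CI_def by blast
  obtain p2 e2 where b2: "blk P p2 e2 y z" and o2: "(P ! p2 = y \<and> P ! e2 = z) \<or> (P ! p2 = - z \<and> P ! e2 = - y)"
    using c2 unfolding CI_def by blast
  have x0: "0 \<le> x" using blk_nonneg[OF b1] .
  note B1 = b1[unfolded blk_def] and B2 = b2[unfolded blk_def]
  have l1: "e1 < length P" "p1 \<le> e1" and l2: "e2 < length P" "p2 \<le> e2" using B1 B2 by auto
  have i1: "\<And>i. i < length P \<Longrightarrow> (p1 \<le> i \<and> i \<le> e1) = (x \<le> qq P i \<and> qq P i \<le> z)" using B1 by auto
  have i2: "\<And>i. i < length P \<Longrightarrow> (p2 \<le> i \<and> i \<le> e2) = (y \<le> qq P i \<and> qq P i \<le> z)" using B2 by auto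
  have pres: "\<forall>v. x \<le> v \<and> v \<le> y \<longrightarrow> (\<exists>i<length P. qq P i = v)"
    using B1 yz by auto
  have inj: "\<And>i j. i < length P \<Longrightarrow> j < length P \<Longrightarrow> qq P i = qq P j \<Longrightarrow> i = j" using qq_inj[OF d] by blast
  consider "P ! p1 = x" "P ! e1 = z" "P ! p2 = y" "P ! e2 = z"
    | "P ! p1 = x" "P ! e1 = z" "P ! p2 = - z" "P ! e2 = - y"
    | "P ! p1 = - z" "P ! e1 = - x" "P ! p2 = y" "P ! e2 = z"
    | "P ! p1 = - z" "P ! e1 = - x" "P ! p2 = - z" "P ! e2 = - y" using o1 o2 by blast
  then show ?thesis
  proof cases
    case 1
    have q: "qq P e1 = z" "qq P e2 = z" "qq P p2 = y" using 1 x0 xy yz by (auto intro: qq_pos)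
    then have "e1 = e2" using inj l1 l2 by auto
    have pp: "p1 \<le> p2" "p2 \<le> e1" using i1[of p2] q l2 l1 xy yz \<open>e1 = e2\<close> by auto
    have "blk P p1 p2 x y" unfolding blk_def
    proof (intro conjI allI impI)
      show "x \<le> y" "p1 \<le> p2" "p2 < length P" using xy pp l1 by auto
      fix i assume i: "i < length P"
      have qy: "qq P i = y \<longrightarrow> i = p2" using inj[OF i, of p2] l2 q by auto
      show "(p1 \<le> i \<and> i \<le> p2) = (x \<le> qq P i \<and> qq P i \<le> y)"
        by (rule arR1[OF i1[OF i] i2[OF i]]) (use \<open>e1 = e2\<close> xy yz l1 l2 q qy pp in auto)
    qed (use pres in auto)
    then show ?thesis unfolding CI_def using 1 by blast
  next
    case 2
    have q: "qq P e1 = z" "qq P p2 = z" "qq P e2 = y" using 2 x0 xy yz by (auto intro: qq_pos qq_neg)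
    then have "e1 = p2" using inj l1 l2 by auto
    have "e2 \<le> e1" using i1[of e2] q l2 xy yz by auto
    then have "e2 = p2" using \<open>e1 = p2\<close> l2 by auto
    then show ?thesis using q yz by auto
  next
    case 3
    have q: "qq P p1 = z" "qq P e2 = z" "qq P p2 = y" using 3 x0 xy yz by (auto intro: qq_pos qq_neg)
    then have "p1 = e2" using inj l1 l2 by auto
    have "p1 \<le> p2" using i1[of p2] q l2 xy yz by auto
    then have "e2 = p2" using \<open>p1 = e2\<close> l2 by auto
    then show ?thesis using q yz by auto
  next
    case 4
    have q: "qq P p1 = z" "qq P p2 = z" "qq P e2 = y" "qq P e1 = x" using 4 x0 xy yz by (auto intro: qq_pos qq_neg)
    then have "p1 = p2" using inj l1 l2 by auto
    have pp: "e2 \<le> e1" using i1[of e2] q l2 xy yz by auto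
    have "blk P e2 e1 x y" unfolding blk_def
    proof (intro conjI allI impI)
      show "x \<le> y" "e2 \<le> e1" "e1 < length P" using xy pp l1 by auto
      fix i assume i: "i < length P"
      have qy: "qq P i = y \<longrightarrow> i = e2" using inj[OF i, of e2] l2 q by auto
      show "(e2 \<le> i \<and> i \<le> e1) = (x \<le> qq P i \<and> qq P i \<le> y)"
        by (rule arR4[OF i1[OF i] i2[OF i]]) (use \<open>p1 = p2\<close> xy yz l1 l2 q qy pp in auto)
    qed (use pres in auto)
    then show ?thesis unfolding CI_def using 4 by blast
  qed
qed

lemma nestL_CI:
  assumes d: "distinct (map abs P)" and xy: "x < y" and yz: "y < z"
    and c1: "CI P x z" and c2: "CI P x y"
  shows "CI P y z"
proof -
  obtain p1 e1 where b1: "blk P p1 e1 x z" and o1: "(P ! p1 = x \<and> P ! e1 = z) \<or> (P ! p1 = - z \<and> P ! e1 = - x)"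
    using c1 unfolding CI_def by blast
  obtain p2 e2 where b2: "blk P p2 e2 x y" and o2: "(P ! p2 = x \<and> P ! e2 = y) \<or> (P ! p2 = - y \<and> P ! e2 = - x)"
    using c2 unfolding CI_def by blast
  have x0: "0 \<le> x" using blk_nonneg[OF b1] .
  note B1 = b1[unfolded blk_def] and B2 = b2[unfolded blk_def]
  have l1: "e1 < length P" "p1 \<le> e1" and l2: "e2 < length P" "p2 \<le> e2" using B1 B2 by auto
  have i1: "\<And>i. i < length P \<Longrightarrow> (p1 \<le> i \<and> i \<le> e1) = (x \<le> qq P i \<and> qq P i \<le> z)" using B1 by auto
  have i2: "\<And>i. i < length P \<Longrightarrow> (p2 \<le> i \<and> i \<le> e2) = (x \<le> qq P i \<and> qq P i \<le> y)" using B2 by auto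
  have pres: "\<forall>v. y \<le> v \<and> v \<le> z \<longrightarrow> (\<exists>i<length P. qq P i = v)"
    using B1 xy by auto
  have inj: "\<And>i j. i < length P \<Longrightarrow> j < length P \<Longrightarrow> qq P i = qq P j \<Longrightarrow> i = j" using qq_inj[OF d] by blast
  consider "P ! p1 = x" "P ! e1 = z" "P ! p2 = x" "P ! e2 = y"
    | "P ! p1 = x" "P ! e1 = z" "P ! p2 = - y" "P ! e2 = - x"
    | "P ! p1 = - z" "P ! e1 = - x" "P ! p2 = x" "P ! e2 = y"
    | "P ! p1 = - z" "P ! e1 = - x" "P ! p2 = - y" "P ! e2 = - x" using o1 o2 by blast
  then show ?thesis
  proof cases
    case 1
    have q: "qq P p1 = x" "qq P p2 = x" "qq P e2 = y" "qq P e1 = z" using 1 x0 xy yz by (auto intro: qq_pos)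
    then have "p1 = p2" using inj l1 l2 by auto
    have pp: "e2 \<le> e1" using i1[of e2] q l2 xy yz by auto
    have "blk P e2 e1 y z" unfolding blk_def
    proof (intro conjI allI impI)
      show "y \<le> z" "e2 \<le> e1" "e1 < length P" using yz pp l1 by auto
      fix i assume i: "i < length P"
      have qy: "qq P i = y \<longrightarrow> i = e2" using inj[OF i, of e2] l2 q by auto
      show "(e2 \<le> i \<and> i \<le> e1) = (y \<le> qq P i \<and> qq P i \<le> z)"
        by (rule arL1[OF i1[OF i] i2[OF i]]) (use \<open>p1 = p2\<close> xy yz l1 l2 q qy pp in auto)
    qed (use pres in auto)
    then show ?thesis unfolding CI_def using 1 by blast
  next
    case 2
    have q: "qq P p1 = x" "qq P e2 = x" "qq P p2 = y" using 2 x0 xy yz by (auto intro: qq_pos qq_neg)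
    then have "p1 = e2" using inj l1 l2 by auto
    have "p1 \<le> p2" using i1[of p2] q l2 xy yz by auto
    then have "e2 = p2" using \<open>p1 = e2\<close> l2 by auto
    then show ?thesis using q xy by auto
  next
    case 3
    have q: "qq P e1 = x" "qq P p2 = x" "qq P e2 = y" using 3 x0 xy yz by (auto intro: qq_pos qq_neg)
    then have "e1 = p2" using inj l1 l2 by auto
    have "e2 \<le> e1" using i1[of e2] q l2 xy yz by auto
    then have "e2 = p2" using \<open>e1 = p2\<close> l2 by auto
    then show ?thesis using q xy by auto
  next
    case 4
    have q: "qq P p1 = z" "qq P p2 = y" "qq P e2 = x" "qq P e1 = x" using 4 x0 xy yz by (auto intro: qq_pos qq_neg)
    then have "e1 = e2" using inj l1 l2 by auto
    have pp: "p1 \<le> p2" using i1[of p2] q l2 xy yz by auto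
    have "blk P p1 p2 y z" unfolding blk_def
    proof (intro conjI allI impI)
      show "y \<le> z" "p1 \<le> p2" "p2 < length P" using yz pp l2 by auto
      fix i assume i: "i < length P"
      have qy: "qq P i = y \<longrightarrow> i = p2" using inj[OF i, of p2] l2 q by auto
      show "(p1 \<le> i \<and> i \<le> p2) = (y \<le> qq P i \<and> qq P i \<le> z)"
        by (rule arL4[OF i1[OF i] i2[OF i]]) (use \<open>e1 = e2\<close> xy yz l1 l2 q qy pp in auto)
    qed (use pres in auto)
    then show ?thesis unfolding CI_def using 4 by blast
  qed
qed

lemma overlap_CI:
  assumes d: "distinct (map abs P)" and xy: "x < y" and yz: "y < z" and zw: "z < w"
    and c1: "CI P x z" and c2: "CI P y w"
  shows "CI P x w"
proof -
  obtain p1 e1 where b1: "blk P p1 e1 x z" and o1: "(P ! p1 = x \<and> P ! e1 = z) \<or> (P ! p1 = - z \<and> P ! e1 = - x)"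
    using c1 unfolding CI_def by blast
  obtain p2 e2 where b2: "blk P p2 e2 y w" and o2: "(P ! p2 = y \<and> P ! e2 = w) \<or> (P ! p2 = - w \<and> P ! e2 = - y)"
    using c2 unfolding CI_def by blast
  have x0: "0 \<le> x" using blk_nonneg[OF b1] .
  note B1 = b1[unfolded blk_def] and B2 = b2[unfolded blk_def]
  have l1: "e1 < length P" "p1 \<le> e1" and l2: "e2 < length P" "p2 \<le> e2" using B1 B2 by auto
  have i1: "\<And>i. i < length P \<Longrightarrow> (p1 \<le> i \<and> i \<le> e1) = (x \<le> qq P i \<and> qq P i \<le> z)" using B1 by auto
  have i2: "\<And>i. i < length P \<Longrightarrow> (p2 \<le> i \<and> i \<le> e2) = (y \<le> qq P i \<and> qq P i \<le> w)" using B2 by auto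
  have pres: "\<forall>v. x \<le> v \<and> v \<le> w \<longrightarrow> (\<exists>i<length P. qq P i = v)"
    using B1 B2 yz by (meson linear order.trans order_less_imp_le)
  have inj: "\<And>i j. i < length P \<Longrightarrow> j < length P \<Longrightarrow> qq P i = qq P j \<Longrightarrow> i = j" using qq_inj[OF d] by blast
  consider "P ! p1 = x" "P ! e1 = z" "P ! p2 = y" "P ! e2 = w"
    | "P ! p1 = x" "P ! e1 = z" "P ! p2 = - w" "P ! e2 = - y"
    | "P ! p1 = - z" "P ! e1 = - x" "P ! p2 = y" "P ! e2 = w"
    | "P ! p1 = - z" "P ! e1 = - x" "P ! p2 = - w" "P ! e2 = - y" using o1 o2 by blast
  then show ?thesis
  proof cases
    case 1
    have q: "qq P p1 = x" "qq P e1 = z" "qq P p2 = y" "qq P e2 = w" using 1 x0 xy yz zw by (auto intro: qq_pos)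
    have pp: "p1 \<le> p2" "p2 \<le> e1" "e1 \<le> e2" using i1[of p2] i2[of e1] q l1 l2 xy yz zw by auto
    have "blk P p1 e2 x w" unfolding blk_def
    proof (intro conjI allI impI)
      show "x \<le> w" "p1 \<le> e2" "e2 < length P" using xy yz zw pp l1 l2 by auto
      fix i assume i: "i < length P"
      show "(p1 \<le> i \<and> i \<le> e2) = (x \<le> qq P i \<and> qq P i \<le> w)"
        by (rule arO1[OF i1[OF i] i2[OF i]]) (use xy yz zw l1 l2 pp in auto)
    qed (use pres in auto)
    then show ?thesis unfolding CI_def using 1 by blast
  next
    case 2
    have q: "qq P e1 = z" "qq P e2 = y" using 2 x0 xy yz zw by (auto intro: qq_pos qq_neg)
    have "e1 \<le> e2" "e2 \<le> e1" using i1[of e2] i2[of e1] q l1 l2 xy yz zw by auto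
    then show ?thesis using q yz by auto
  next
    case 3
    have q: "qq P p1 = z" "qq P p2 = y" using 3 x0 xy yz zw by (auto intro: qq_pos qq_neg)
    have "p1 \<le> p2" "p2 \<le> p1" using i1[of p2] i2[of p1] q l1 l2 xy yz zw by auto
    then show ?thesis using q yz by auto
  next
    case 4
    have q: "qq P p1 = z" "qq P e1 = x" "qq P p2 = w" "qq P e2 = y" using 4 x0 xy yz zw by (auto intro: qq_pos qq_neg)
    have pp: "p2 \<le> p1" "p1 \<le> e2" "e2 \<le> e1" using i1[of e2] i2[of p1] q l1 l2 xy yz zw by auto
    have "blk P p2 e1 x w" unfolding blk_def
    proof (intro conjI allI impI)
      show "x \<le> w" "p2 \<le> e1" "e1 < length P" using xy yz zw pp l1 l2 by auto
      fix i assume i: "i < length P"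
      show "(p2 \<le> i \<and> i \<le> e1) = (x \<le> qq P i \<and> qq P i \<le> w)"
        by (rule arO4[OF i1[OF i] i2[OF i]]) (use xy yz zw l1 l2 pp in auto)
    qed (use pres in auto)
    then show ?thesis unfolding CI_def using 4 by blast
  qed
qed



lemma cons_lt: "a < c \<Longrightarrow> conserved Ps n a c \<longleftrightarrow> (\<forall>P\<in>set Ps. conserved_in P a c)"
  unfolding conserved_def by auto

lemma cons_CI: "\<forall>P\<in>set Ps. distinct (map abs P) \<Longrightarrow> a < c \<Longrightarrow>
   conserved Ps n a c \<longleftrightarrow> (\<forall>P\<in>set Ps. CI P a c)"
  using cons_lt[of a c Ps n] conserved_in_CI[of _ a c] by blast

lemma chainC: assumes H: "\<forall>P\<in>set Ps. distinct (map abs P)" and o: "x < y" "y < z"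
  and c: "conserved Ps n x y" "conserved Ps n y z" shows "conserved Ps n x z"
proof -
  have 1: "\<forall>P\<in>set Ps. CI P x y" "\<forall>P\<in>set Ps. CI P y z" using c cons_CI[OF H] o by blast+
  have "\<forall>P\<in>set Ps. CI P x z" using 1 H chain_CI o by blast
  then show ?thesis using cons_CI[OF H, of x z n] o by simp
qed

lemma nestRC: assumes H: "\<forall>P\<in>set Ps. distinct (map abs P)" and o: "x < y" "y < z"
  and c: "conserved Ps n x z" "conserved Ps n y z" shows "conserved Ps n x y"
proof -
  have 1: "\<forall>P\<in>set Ps. CI P x z" "\<forall>P\<in>set Ps. CI P y z" using c cons_CI[OF H] o
    by (meson order.strict_trans)+
  have "\<forall>P\<in>set Ps. CI P x y" using 1 H nestR_CI o by blast
  then show ?thesis using cons_CI[OF H, of x y n] o by simp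
qed

lemma nestLC: assumes H: "\<forall>P\<in>set Ps. distinct (map abs P)" and o: "x < y" "y < z"
  and c: "conserved Ps n x z" "conserved Ps n x y" shows "conserved Ps n y z"
proof -
  have 1: "\<forall>P\<in>set Ps. CI P x z" "\<forall>P\<in>set Ps. CI P x y" using c cons_CI[OF H] o
    by (meson order.strict_trans)+
  have "\<forall>P\<in>set Ps. CI P y z" using 1 H nestL_CI o by blast
  then show ?thesis using cons_CI[OF H, of y z n] o by simp
qed

lemma overlapC: assumes H: "\<forall>P\<in>set Ps. distinct (map abs P)" and o: "x < y" "y < z" "z < w"
  and c: "conserved Ps n x z" "conserved Ps n y w" shows "conserved Ps n x w"
proof -
  have xz: "x < z" "y < w" "x < w" using o by auto
  have 1: "\<forall>P\<in>set Ps. CI P x z" "\<forall>P\<in>set Ps. CI P y w" using c cons_CI[OF H] xz by blast+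
  have "\<forall>P\<in>set Ps. CI P x w" using 1 H overlap_CI o by blast
  then show ?thesis using cons_CI[OF H, of x w n] xz by simp
qed

lemma conserved_le: "conserved Ps n a c \<Longrightarrow> a \<le> c"
  unfolding conserved_def by auto

theorem lemma9:
  fixes n :: nat and Ps :: "int list list" and a0 c0 a c :: int
  assumes "n \<ge> 2"
    and "Ps \<noteq> []"
    and "hd Ps = map int [1..<n+1]"
    and "\<forall>P\<in>set Ps. signed_perm n P \<and> hd P = 1 \<and> last P = int n"
    and "conserved Ps n a0 c0"
    and "conserved Ps n a c"
    and "{a..c} \<subseteq> {a0..c0}"
  shows "let fs = sorted_list_of_set (max_frontiers Ps n a0 c0) in
    ((\<exists>l < length fs. a \<le> fs ! l \<and> fs ! l \<le> c)
       \<and> (\<exists>i j. i \<le> j \<and> j < length fs \<and> {a..c} = {fs ! i..fs ! j}))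
    \<or> (\<not> (\<exists>l < length fs. a \<le> fs ! l \<and> fs ! l \<le> c)
       \<and> (\<exists>i. i + 1 < length fs \<and> fs ! i < a \<and> a \<le> c \<and> c < fs ! (i + 1)))"
proof -
  have H: "\<forall>P\<in>set Ps. distinct (map abs P)" using assms(4) unfolding signed_perm_def by blast
  define M where "M = max_frontiers Ps n a0 c0"
  define C where "C = conserved Ps n"
  have C0: "C a0 c0" "C a c" using assms(5,6) C_def by auto
  have ac: "a \<le> c" using conserved_le assms(6) by blast
  have a0c0: "a0 \<le> c0" using conserved_le assms(5) by blast
  have a0a: "a0 \<le> a" and cc0: "c \<le> c0" using assms(7) ac by auto
  have chain: "\<And>x y z. x < y \<Longrightarrow> y < z \<Longrightarrow> C x y \<Longrightarrow> C y z \<Longrightarrow> C x z"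
    using chainC[OF H] C_def by blast
  have nR: "\<And>x y z. x < y \<Longrightarrow> y < z \<Longrightarrow> C x z \<Longrightarrow> C y z \<Longrightarrow> C x y"
    using nestRC[OF H] C_def by blast
  have nL: "\<And>x y z. x < y \<Longrightarrow> y < z \<Longrightarrow> C x z \<Longrightarrow> C x y \<Longrightarrow> C y z"
    using nestLC[OF H] C_def by blast
  have ov: "\<And>x y z w. x < y \<Longrightarrow> y < z \<Longrightarrow> z < w \<Longrightarrow> C x z \<Longrightarrow> C y w \<Longrightarrow> C x w"
    using overlapC[OF H] C_def by blast
  have Msub: "M \<subseteq> {a0..c0}" unfolding M_def max_frontiers_def frontier_set_def by auto
  then have finM: "finite M" using finite_subset by blast
  have fr: "\<And>f. f \<in> M \<Longrightarrow> a0 \<le> f \<and> f \<le> c0 \<and> (a0 < f \<longrightarrow> C a0 f) \<and> (f < c0 \<longrightarrow> C f c0)"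
    unfolding M_def max_frontiers_def frontier_set_def C_def by auto
  have memM: "\<And>v. a0 \<le> v \<Longrightarrow> v \<le> c0 \<Longrightarrow> (a0 < v \<longrightarrow> C a0 v) \<Longrightarrow> (v < c0 \<longrightarrow> C v c0) \<Longrightarrow> v \<in> M"
  proof -
    fix v assume v: "a0 \<le> v" "v \<le> c0" "a0 < v \<longrightarrow> C a0 v" "v < c0 \<longrightarrow> C v c0"
    have "frontier_set Ps n a0 c0 {a0, v, c0}"
      unfolding frontier_set_def using v C0 a0c0 unfolding C_def by auto
    then show "v \<in> M" unfolding M_def max_frontiers_def by blast
  qed
  have a0M: "a0 \<in> M" using memM a0c0 C0 by auto
  have c0M: "c0 \<in> M" using memM a0c0 C0 by auto
  define fs where "fs = sorted_list_of_set M"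
  have setfs: "set fs = M" using finM fs_def by simp
  have sfs: "sorted_wrt (<) fs" unfolding fs_def by simp
  have idx: "\<And>v. v \<in> M \<Longrightarrow> \<exists>l<length fs. fs ! l = v" using setfs by (metis in_set_conv_nth)
  have inM: "\<And>l. l < length fs \<Longrightarrow> fs ! l \<in> M" using setfs by auto
  have mono: "\<And>i j. i < j \<Longrightarrow> j < length fs \<Longrightarrow> fs ! i < fs ! j"
    using sfs sorted_wrt_nth_less by blast
  show ?thesis
  proof (cases "\<exists>f\<in>M. a \<le> f \<and> f \<le> c")
    case True
    then obtain f where f: "f \<in> M" "a \<le> f" "f \<le> c" by blast
    note ff = fr[OF f(1)]
    have aM: "a \<in> M"
    proof (cases "f = a")
      case True then show ?thesis using f by simp
    next
      case False
      then have af: "a < f" using f by auto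
      have Ca0a: "a0 < a \<longrightarrow> C a0 a"
      proof
        assume "a0 < a"
        have "C a0 c"
        proof (cases "f < c")
          case True then show ?thesis using ov[of a0 a f c] \<open>a0 < a\<close> af ff C0 by auto
        next
          case False then show ?thesis using f ff \<open>a0 < a\<close> af by auto
        qed
        then show "C a0 a" using nR[of a0 a c] \<open>a0 < a\<close> af f C0 by auto
      qed
      have Caf: "C a f"
      proof (cases "a0 < a")
        case True then show ?thesis using nL[of a0 a f] Ca0a ff af by auto
      next
        case False then have "a0 = a" using a0a by auto
        then show ?thesis using ff af by auto
      qed
      have Cac0: "a < c0 \<longrightarrow> C a c0"
      proof
        assume "a < c0"
        show "C a c0"
        proof (cases "f < c0")
          case True then show ?thesis using chain[of a f c0] Caf ff af by auto
        next
          case False then have "c = c0" using f cc0 by auto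
          then show ?thesis using C0 by auto
        qed
      qed
      show ?thesis using memM[of a] a0a ac cc0 Ca0a Cac0 by auto
    qed
    have cM: "c \<in> M"
    proof (cases "f = c")
      case True then show ?thesis using f by simp
    next
      case False
      then have fc: "f < c" using f by auto
      have Ccc0: "c < c0 \<longrightarrow> C c c0"
      proof
        assume "c < c0"
        have "C a c0"
        proof (cases "a < f")
          case True then show ?thesis using ov[of a f c c0] \<open>c < c0\<close> fc ff C0 by auto
        next
          case False then show ?thesis using f ff \<open>c < c0\<close> fc by auto
        qed
        then show "C c c0" using nL[of a c c0] \<open>c < c0\<close> fc f C0 by auto
      qed
      have Cfc: "C f c"
      proof (cases "c < c0")
        case True then show ?thesis using nR[of f c c0] Ccc0 ff fc by auto
      next
        case False then have "c = c0" using cc0 by auto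
        then show ?thesis using ff fc by auto
      qed
      have Ca0c: "a0 < c \<longrightarrow> C a0 c"
      proof
        assume "a0 < c"
        show "C a0 c"
        proof (cases "a0 < f")
          case True then show ?thesis using chain[of a0 f c] Cfc ff fc by auto
        next
          case False then have "a0 = f" using ff by auto
          then show ?thesis using Cfc by auto
        qed
      qed
      show ?thesis using memM[of c] a0a ac cc0 Ca0c Ccc0 by auto
    qed
    obtain i where i: "i < length fs" "fs ! i = a" using idx aM by blast
    obtain j where j: "j < length fs" "fs ! j = c" using idx cM by blast
    have "i \<le> j"
    proof (rule ccontr)
      assume "\<not> i \<le> j"
      then have "fs ! j < fs ! i" using mono i j by auto
      then show False using i j ac by auto
    qed
    then have "(\<exists>l < length fs. a \<le> fs ! l \<and> fs ! l \<le> c)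
       \<and> (\<exists>i j. i \<le> j \<and> j < length fs \<and> {a..c} = {fs ! i..fs ! j})"
      using i j ac by auto
    then show ?thesis unfolding fs_def[symmetric] M_def[symmetric] Let_def by blast
  next
    case False
    have nl: "\<not> (\<exists>l < length fs. a \<le> fs ! l \<and> fs ! l \<le> c)" using False inM by blast
    define L where "L = {g\<in>M. g < a}"
    have a0L: "a0 \<in> L" unfolding L_def using a0M False a0a ac by force
    have finL: "finite L" using finM L_def by simp
    define g where "g = Max L"
    have gL: "g \<in> L" using a0L finL g_def Max_in by blast
    have gmax: "\<And>h. h \<in> L \<Longrightarrow> h \<le> g" using finL g_def by simp
    obtain i where i: "i < length fs" "fs ! i = g" using idx gL L_def by blast
    obtain k where k: "k < length fs" "fs ! k = c0" using idx c0M by blast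
    have "c < c0" using False c0M cc0 ac by force
    have "i < k"
    proof (rule ccontr)
      assume "\<not> i < k"
      then have "fs ! k \<le> fs ! i" using mono[of k i] i k by (cases "k = i") auto
      then show False using i k gL L_def \<open>c < c0\<close> ac by auto
    qed
    then have i1: "i + 1 < length fs" using k by auto
    have "fs ! i < fs ! (i + 1)" using mono i1 by auto
    moreover have "fs ! (i + 1) \<in> M" using inM i1 by auto
    ultimately have "\<not> fs ! (i + 1) < a" using gmax i L_def by force
    then have "c < fs ! (i + 1)" using nl i1 by force
    then have "\<exists>i. i + 1 < length fs \<and> fs ! i < a \<and> a \<le> c \<and> c < fs ! (i + 1)"
      using i i1 gL L_def ac by auto
    then show ?thesis using nl unfolding fs_def[symmetric] M_def[symmetric] Let_def by blast
  qed
qed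

end
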